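(* Let $\phi$ be a uniformly convex N-function. Then the map $(\delta^-,\delta^+,t)\mapsto\phi'_{(\delta^-,\delta^+)}(t)$ is continuous on $[0,1]\times[1,\infty]\times[0,\infty)$. Furthermore, the map $(\delta^-,\delta^+,Q)\mapsto A_{(\delta^-,\delta^+)}(Q)$ is continuous on $[0,1]\times[1,\infty]\times\mathbb{R}^{n\times n}$, and the same holds with $A_{(\delta^-,\delta^+)}$ replaced by $A^{-1}_{(\delta^-,\delta^+)}$, $V_{(\delta^-,\delta^+)}$ or $V^{-1}_{(\delta^-,\delta^+)}$.
   Context: An N-function is a function $\phi:[0,\infty)\to[0,\infty)$ with right-continuous non-decreasing derivative $\phi'$, $\phi'(0)=0$, $\phi'(t)>0$ for $t>0$, $\phi'(t)\to\infty$, $\phi(t)=\int_0^t\phi'$. It is uniformly convex if $\phi\in C^1([0,\infty))\cap C^2((0,\infty))$ and $\inf_{t>0}\frac{\phi''(t)t}{\phi'(t)}+1>1$, $\sup_{t>0}\frac{\phi''(t)t}{\phi'(t)}+1<\infty$. For $0\le\delta^-\le\delta^+\le\infty$ the truncation is given by $\phi'_{(\delta^-,\delta^+)}(t):=\frac{\phi'(m)}{m}\,t$ with $m=\max(\delta^-,\min(t,\delta^+))$ (and value $0$ when $t=0$); $[1,\infty]$ carries the topology of the extended half-line. For $Q\in\mathbb{R}^{n\times n}$, $A_{(\delta^-,\delta^+)}(Q):=\phi'_{(\delta^-,\delta^+)}(|Q|)\frac{Q}{|Q|}$ and $V_{(\delta^-,\delta^+)}(Q):=\sqrt{\phi'_{(\delta^-,\delta^+)}(|Q|)|Q|}\,\frac{Q}{|Q|}$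 (both $0$ at $Q=0$), $|\cdot|$ the Frobenius norm; $A^{-1}_{(\delta^-,\delta^+)}$ and $V^{-1}_{(\delta^-,\delta^+)}$ denote the inverse maps of these bijections of $\mathbb{R}^{n\times n}$. *)

theory Defs
  imports "HOL-Analysis.Analysis"
begin

text \<open>An N-function \<open>phi\<close> together with its (right) derivative \<open>dphi\<close>.
  Only values on [0,\<infinity>) matter.\<close>
definition N_function :: "(real \<Rightarrow> real) \<Rightarrow> (real \<Rightarrow> real) \<Rightarrow> bool" where
  "N_function phi dphi \<longleftrightarrow>
     mono_on {0..} dphi \<and>
     (\<forall>t\<ge>0. continuous (at_right t) dphi) \<and>
     dphi 0 = 0 \<and>
     (\<forall>t>0. dphi t > 0) \<and>
     filterlim dphi at_top at_top \<and>
     (\<forall>t\<ge>0. phi t = integral {0..t} dphi)"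

text \<open>Uniform convexity: \<open>phi \<in> C^1([0,\<infinity>)) \<inter> C^2((0,\<infinity>))\<close> with
  \<open>inf_{t>0} phi''(t) t / phi'(t) + 1 > 1\<close> and \<open>sup_{t>0} phi''(t) t / phi'(t) + 1 < \<infinity>\<close>.\<close>
definition uniformly_convex_N_function :: "(real \<Rightarrow> real) \<Rightarrow> (real \<Rightarrow> real) \<Rightarrow> bool" where
  "uniformly_convex_N_function phi dphi \<longleftrightarrow>
     N_function phi dphi \<and>
     (\<forall>t\<ge>0. (phi has_real_derivative dphi t) (at t within {0..})) \<and>
     continuous_on {0..} dphi \<and>
     (\<forall>t>0. dphi differentiable (at t)) \<and>
     continuous_on {0<..} (deriv dphi) \<and>
     (\<exists>c>0. \<forall>t>0. c \<le> deriv dphi t * t / dphi t) \<and>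
     (\<exists>C. \<forall>t>0. deriv dphi t * t / dphi t \<le> C)"

definition trunc_dphi :: "(real \<Rightarrow> real) \<Rightarrow> real \<Rightarrow> ereal \<Rightarrow> real \<Rightarrow> real" where
  "trunc_dphi dphi dm dp t =
     (if t = 0 then 0
      else (let m = max dm (real_of_ereal (min (ereal t) dp)) in dphi m / m * t))"

definition A_trunc :: "(real \<Rightarrow> real) \<Rightarrow> real \<Rightarrow> ereal \<Rightarrow> real^'n^'n \<Rightarrow> real^'n^'n" where
  "A_trunc dphi dm dp Q =
     (if Q = 0 then 0 else (trunc_dphi dphi dm dp (norm Q) / norm Q) *\<^sub>R Q)"

definition V_trunc :: "(real \<Rightarrow> real) \<Rightarrow> real \<Rightarrow> ereal \<Rightarrow> real^'n^'n \<Rightarrow> real^'n^'n" where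
  "V_trunc dphi dm dp Q =
     (if Q = 0 then 0 else (sqrt (trunc_dphi dphi dm dp (norm Q) * norm Q) / norm Q) *\<^sub>R Q)"

definition A_trunc_inv :: "(real \<Rightarrow> real) \<Rightarrow> real \<Rightarrow> ereal \<Rightarrow> real^'n^'n \<Rightarrow> real^'n^'n" where
  "A_trunc_inv dphi dm dp = inv (A_trunc dphi dm dp)"

definition V_trunc_inv :: "(real \<Rightarrow> real) \<Rightarrow> real \<Rightarrow> ereal \<Rightarrow> real^'n^'n \<Rightarrow> real^'n^'n" where
  "V_trunc_inv dphi dm dp = inv (V_trunc dphi dm dp)"

end

theory Submission
  imports Defs
begin

definition radial :: "('x \<Rightarrow> real \<Rightarrow> real) \<Rightarrow> 'x \<Rightarrow> 'b::real_normed_vector \<Rightarrow> 'b" where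
  "radial r x Q = (if Q = 0 then 0 else (r x (norm Q) / norm Q) *\<^sub>R Q)"

lemma radial_cont:
  fixes r :: "'a::topological_space \<Rightarrow> real \<Rightarrow> real"
  assumes cont: "continuous_on (S \<times> {0..}) (\<lambda>z. r (fst z) (snd z))"
    and zero: "\<And>x. x \<in> S \<Longrightarrow> r x 0 = 0"
  shows "continuous_on (S \<times> UNIV) (\<lambda>z. radial r (fst z) (snd z :: 'b::real_normed_vector))"
proof -
  have c1: "continuous_on (S \<times> UNIV) (\<lambda>z. r (fst z) (norm (snd z :: 'b)))"
  proof -
    have a: "continuous_on (S \<times> UNIV) (\<lambda>z::'a\<times>'b. (fst z, norm (snd z)))"
      by (intro continuous_intros)
    have b: "(\<lambda>z::'a\<times>'b. (fst z, norm (snd z))) ` (S \<times> UNIV) \<subseteq> S \<times> {0..}" by auto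
    from continuous_on_compose2[OF cont a b] show ?thesis by simp
  qed
  show ?thesis unfolding continuous_on_def
  proof (intro ballI)
    fix z :: "'a \<times> 'b" assume zS: "z \<in> S \<times> UNIV"
    have t1: "((\<lambda>z. r (fst z) (norm (snd z))) \<longlongrightarrow> r (fst z) (norm (snd z))) (at z within S \<times> UNIV)"
      using c1 zS unfolding continuous_on_def by blast
    show "((\<lambda>z. radial r (fst z) (snd z)) \<longlongrightarrow> radial r (fst z) (snd z)) (at z within S \<times> UNIV)"
    proof (cases "snd z = 0")
      case True
      then have "r (fst z) (norm (snd z)) = 0" using zero zS by auto
      with t1 have t0: "((\<lambda>z. r (fst z) (norm (snd z))) \<longlongrightarrow> 0) (at z within S \<times> UNIV)" by simp
      have "((\<lambda>z. radial r (fst z) (snd z)) \<longlongrightarrow> 0) (at z within S \<times> UNIV)"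
        apply (rule tendsto_0_le[OF t0, where K=1])
        apply (rule always_eventually)
        apply (auto simp: radial_def)
        done
      then show ?thesis using True by (simp add: radial_def)
    next
      case False
      have ev: "eventually (\<lambda>w. snd w \<noteq> 0) (at z within S \<times> UNIV)"
        apply (rule tendsto_imp_eventually_ne[OF _ False])
        apply (intro tendsto_intros)
        done
      have "((\<lambda>w. (r (fst w) (norm (snd w)) / norm (snd w)) *\<^sub>R snd w) \<longlongrightarrow>
          (r (fst z) (norm (snd z)) / norm (snd z)) *\<^sub>R snd z) (at z within S \<times> UNIV)"
        using False by (intro tendsto_intros t1) auto
      then show ?thesis
        using False by (subst tendsto_cong[OF eventually_mono[OF ev]]) (auto simp: radial_def)
    qed
  qed
qed

lemma ev_within: "(\<And>z. z \<in> D \<Longrightarrow> P z) \<Longrightarrow> eventually P (at a within D)"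
  unfolding eventually_at_filter by (simp add: always_eventually)

lemma radial_comp:
  assumes "\<And>t. t > 0 \<Longrightarrow> g x t > 0" "\<And>t. t > 0 \<Longrightarrow> f x (g x t) = t"
  shows "radial f x (radial g x Q) = Q"
proof (cases "Q = 0")
  case True then show ?thesis by (simp add: radial_def)
next
  case False
  define n where "n = norm Q"
  have n: "n > 0" using False by (simp add: n_def)
  define u where "u = g x n"
  have u: "u > 0" "f x u = n" using assms n by (auto simp: u_def)
  have "radial g x Q = (u / n) *\<^sub>R Q" using False by (simp add: radial_def u_def n_def)
  moreover have "norm ((u / n) *\<^sub>R Q) = u" using u n by (simp add: n_def)
  moreover have "(u / n) *\<^sub>R Q \<noteq> 0" using u n False by simp
  ultimately show ?thesis using u n by (simp add: radial_def)
qed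

lemma inv_scalar:
  fixes r :: "'a::topological_space \<Rightarrow> real \<Rightarrow> real"
  assumes cont: "continuous_on (S \<times> {0..}) (\<lambda>z. r (fst z) (snd z))"
    and zero: "\<And>x. x \<in> S \<Longrightarrow> r x 0 = 0"
    and smono: "\<And>x s t. x \<in> S \<Longrightarrow> 0 \<le> s \<Longrightarrow> s < t \<Longrightarrow> r x s < r x t"
    and unb: "\<And>x s. x \<in> S \<Longrightarrow> 0 \<le> s \<Longrightarrow> \<exists>t\<ge>0. s \<le> r x t"
  defines "h \<equiv> \<lambda>x s. THE t. 0 \<le> t \<and> r x t = s"
  shows "continuous_on (S \<times> {0..}) (\<lambda>z. h (fst z) (snd z))"
    and "\<And>x. x \<in> S \<Longrightarrow> h x 0 = 0"
    and "\<And>x s t. x \<in> S \<Longrightarrow> 0 \<le> (s::real) \<Longrightarrow> s < t \<Longrightarrow> h x s < h x t"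
    and "\<And>x s. x \<in> S \<Longrightarrow> 0 \<le> (s::real) \<Longrightarrow> \<exists>t\<ge>0. s \<le> h x t"
    and "\<And>x. x \<in> S \<Longrightarrow> inv (radial r x) = (radial h x :: 'b::real_normed_vector \<Rightarrow> 'b)"
proof -
  have mono: "r x s \<le> r x t" if "x \<in> S" "0 \<le> s" "s \<le> t" for x s t
    using smono[OF that(1,2)] that by (cases "s = t") (auto intro: less_imp_le)
  have ex: "\<exists>t. 0 \<le> t \<and> r x t = s" if x: "x \<in> S" and s: "0 \<le> s" for x s
  proof -
    obtain T where T: "T \<ge> 0" "s \<le> r x T" using unb[OF x s] by blast
    have c: "continuous_on {0..T} (r x)"
    proof -
      have a: "continuous_on {0..T} (\<lambda>t. (x, t))" by (intro continuous_intros)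
      have b: "(\<lambda>t. (x, t)) ` {0..T} \<subseteq> S \<times> {0..}" using x by auto
      from continuous_on_compose2[OF cont a b] show ?thesis by simp
    qed
    from IVT'[of "r x" 0 s T, OF _ T(2) T(1) c] zero[OF x] s
    show ?thesis by auto
  qed
  have uniq: "t1 = t2" if "x \<in> S" "0 \<le> t1" "0 \<le> t2" "r x t1 = r x t2" for x t1 t2
    using smono[of x t1 t2] smono[of x t2 t1] that by (cases t1 t2 rule: linorder_cases) auto
  have hp: "0 \<le> h x s \<and> r x (h x s) = s" if "x \<in> S" "0 \<le> s" for x s
    unfolding h_def by (rule theI') (use ex[OF that] uniq[OF that(1)] in blast)
  have hr: "h x (r x t) = t" if "x \<in> S" "0 \<le> t" for x t
  proof -
    have "0 \<le> r x t" using mono[OF that(1) order_refl that(2)] zero[OF that(1)] by simp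
    from hp[OF that(1) this] show ?thesis using uniq[OF that(1) _ that(2)] by auto
  qed
  show h0: "\<And>x. x \<in> S \<Longrightarrow> h x 0 = 0" using hr zero by fastforce
  show hmono: "\<And>x s t. x \<in> S \<Longrightarrow> 0 \<le> (s::real) \<Longrightarrow> s < t \<Longrightarrow> h x s < h x t"
  proof -
    fix x and s t :: real assume a: "x \<in> S" "0 \<le> s" "s < t"
    show "h x s < h x t"
    proof (rule ccontr)
      assume "\<not> h x s < h x t"
      then have "h x t \<le> h x s" by simp
      moreover have "0 \<le> h x t" using hp[OF a(1), of t] a by simp
      ultimately have "r x (h x t) \<le> r x (h x s)" using mono[OF a(1)] by blast
      then show False using hp[OF a(1)] a by auto
    qed
  qed
  show "\<And>x s. x \<in> S \<Longrightarrow> 0 \<le> (s::real) \<Longrightarrow> \<exists>t\<ge>0. s \<le> h x t"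
  proof -
    fix x and s :: real assume a: "x \<in> S" "0 \<le> s"
    have "0 \<le> r x s" using mono[OF a(1) order_refl a(2)] zero[OF a(1)] by simp
    then show "\<exists>t\<ge>0. s \<le> h x t" using hr[OF a] by auto
  qed
  show "continuous_on (S \<times> {0..}) (\<lambda>z. h (fst z) (snd z))"
    unfolding continuous_on_def
  proof (intro ballI)
    fix z0 assume z0: "z0 \<in> S \<times> {0::real..}"
    define D where "D = S \<times> {0::real..}"
    let ?F = "at z0 within D"
    have inD: "eventually (\<lambda>z. z \<in> D) ?F" by (rule ev_within) auto
    obtain x0 s0 where zz: "z0 = (x0, s0)" "x0 \<in> S" "0 \<le> s0" using z0 by auto
    define t0 where "t0 = h x0 s0"
    have t0: "0 \<le> t0" "r x0 t0 = s0" using hp[OF zz(2,3)] by (auto simp: t0_def)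
    have cb: "((\<lambda>z. r (fst z) b) \<longlongrightarrow> r x0 b) ?F" if "0 \<le> b" for b
    proof -
      have "continuous_on D (\<lambda>z. r (fst z) b)"
      proof -
        have a: "continuous_on D (\<lambda>z. (fst z, b))" by (intro continuous_intros)
        have b: "(\<lambda>z. (fst z, b)) ` D \<subseteq> S \<times> {0..}" using that by (auto simp: D_def)
        from continuous_on_compose2[OF cont a b] show ?thesis by simp
      qed
      then show ?thesis using z0 zz unfolding continuous_on_def D_def by auto
    qed
    have e: "h (fst z0) (snd z0) = t0" using zz t0_def by simp
    have cs: "((\<lambda>z. snd z) \<longlongrightarrow> s0) ?F" using tendsto_snd[OF tendsto_ident_at, of z0 D] zz by simp
    show "((\<lambda>z. h (fst z) (snd z)) \<longlongrightarrow> h (fst z0) (snd z0)) (at z0 within S \<times> {0..})"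
      unfolding D_def[symmetric] e
    proof (rule order_tendstoI)
      fix a assume a: "a < t0"
      show "eventually (\<lambda>z. a < h (fst z) (snd z)) ?F"
      proof (cases "a < 0")
        case True
        show ?thesis using inD by (rule eventually_mono) (use hp True in \<open>force simp: D_def\<close>)
      next
        case False
        then have "r x0 a < s0" using smono[OF zz(2), of a t0] a t0 by auto
        then have "eventually (\<lambda>z. 0 < snd z - r (fst z) a) ?F"
        proof -
          have lim: "((\<lambda>z. snd z - r (fst z) a) \<longlongrightarrow> s0 - r x0 a) ?F"
            using cs cb[of a] False by (intro tendsto_diff) auto
          show ?thesis by (rule order_tendstoD(1)[OF lim]) (use \<open>r x0 a < s0\<close> in simp)
        qed
        then show ?thesis using inD
        proof (rule eventually_elim2)
          fix z assume "0 < snd z - r (fst z) a" "z \<in> D"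
          then show "a < h (fst z) (snd z)"
            using hp[of "fst z" "snd z"] mono[of "fst z" "h (fst z) (snd z)" a] False
            by (force simp: D_def)
        qed
      qed
    next
      fix b assume b: "t0 < b"
      then have "s0 < r x0 b" using smono[OF zz(2), of t0 b] t0 by auto
      then have "eventually (\<lambda>z. 0 < r (fst z) b - snd z) ?F"
      proof -
        have lim: "((\<lambda>z. r (fst z) b - snd z) \<longlongrightarrow> r x0 b - s0) ?F"
          using cs cb[of b] b t0 by (intro tendsto_diff) auto
        show ?thesis by (rule order_tendstoD(1)[OF lim]) (use \<open>s0 < r x0 b\<close> in simp)
      qed
      then show "eventually (\<lambda>z. h (fst z) (snd z) < b) ?F" using inD
      proof (rule eventually_elim2)
        fix z assume "0 < r (fst z) b - snd z" "z \<in> D"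
        then show "h (fst z) (snd z) < b"
          using hp[of "fst z" "snd z"] mono[of "fst z" b "h (fst z) (snd z)"] b t0
          by (force simp: D_def)
      qed
    qed
  qed
  show "\<And>x. x \<in> S \<Longrightarrow> inv (radial r x) = (radial h x :: 'b::real_normed_vector \<Rightarrow> 'b)"
  proof -
    fix x assume x: "x \<in> S"
    have rpos: "r x t > 0" if "t > 0" for t using smono[OF x, of 0 t] zero[OF x] that by auto
    have hpos: "h x t > 0" if "t > 0" for t using hmono[OF x, of 0 t] h0[OF x] that by auto
    have 1: "radial h x (radial r x Q) = Q" for Q :: 'b
      by (rule radial_comp) (use rpos hr x in auto)
    have 2: "radial r x (radial h x Q) = Q" for Q :: 'b
      by (rule radial_comp) (use hpos hp x in auto)
    show "inv (radial r x) = (radial h x :: 'b \<Rightarrow> 'b)"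
      by (rule inj_imp_inv_eq) (auto intro: inj_on_inverseI[where g="radial h x"] 1 2)
  qed
qed


lemma dphi_facts:
  assumes "uniformly_convex_N_function phi dphi"
  shows "continuous_on {0..} dphi" "dphi 0 = 0" "\<And>t. t > 0 \<Longrightarrow> dphi t > 0"
    "\<And>a b. 0 \<le> a \<Longrightarrow> a < b \<Longrightarrow> dphi a < dphi b"
    "filterlim dphi at_top at_top"
proof -
  have N: "N_function phi dphi" and cont: "continuous_on {0..} dphi"
    and dif: "\<forall>t>0. dphi differentiable (at t)"
    and c: "\<exists>c>0. \<forall>t>0. c \<le> deriv dphi t * t / dphi t"
    using assms unfolding uniformly_convex_N_function_def by auto
  show "continuous_on {0..} dphi" by (rule cont)
  show z: "dphi 0 = 0" using N unfolding N_function_def by auto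
  show p: "\<And>t. t > 0 \<Longrightarrow> dphi t > 0" using N unfolding N_function_def by auto
  show "filterlim dphi at_top at_top" using N unfolding N_function_def by auto
  obtain c where c: "c > 0" "\<And>t. t > 0 \<Longrightarrow> c \<le> deriv dphi t * t / dphi t" using c by auto
  have dpos: "deriv dphi t > 0" if "t > 0" for t
  proof -
    have "0 < deriv dphi t * t / dphi t" using c(1) c(2)[OF that] by linarith
    then show ?thesis using that p[OF that] by (simp add: zero_less_divide_iff zero_less_mult_iff)
  qed
  show "\<And>a b. 0 \<le> a \<Longrightarrow> a < b \<Longrightarrow> dphi a < dphi b"
  proof -
    fix a b :: real assume ab: "0 \<le> a" "a < b"
    show "dphi a < dphi b"
    proof (cases "a = 0")
      case True then show ?thesis using z p ab by auto
    next
      case False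
      show ?thesis
      proof (rule DERIV_pos_imp_increasing[OF ab(2)])
        fix x assume "a \<le> x" "x \<le> b"
        then have x: "x > 0" using False ab by auto
        then have "DERIV dphi x :> deriv dphi x" using dif DERIV_deriv_iff_real_differentiable by blast
        then show "\<exists>y. DERIV dphi x :> y \<and> y > 0" using dpos[OF x] by blast
      qed
    qed
  qed
qed

lemma rmin:
  assumes "dp \<ge> (1::ereal)" "t \<ge> 0"
  shows "min t 1 \<le> real_of_ereal (min (ereal t) dp)" "real_of_ereal (min (ereal t) dp) \<le> t"
  using assms by (cases dp; auto simp: min_def)+

lemma sm_real:
  fixes dphi :: "real \<Rightarrow> real"
  assumes dstrict: "\<And>a b. 0 \<le> a \<Longrightarrow> a < b \<Longrightarrow> dphi a < dphi b"
    and dpos: "\<And>t. t > 0 \<Longrightarrow> dphi t > 0"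
    and dm: "0 \<le> dm" "dm \<le> D" "0 < D" and st: "0 \<le> s" "s < t"
  shows "dphi (max dm (min s D)) * (s / max dm (min s D)) < dphi (max dm (min t D)) * (t / max dm (min t D))"
proof -
  define a where "a = max dm (min s D)"
  define b where "b = max dm (min t D)"
  have b: "b > 0" using dm st by (auto simp: b_def)
  have ab: "a \<le> b" using dm st by (auto simp: a_def b_def)
  have dbpos: "dphi b > 0" using dpos b by simp
  show ?thesis
  proof (cases "s = 0")
    case True then show ?thesis using b dbpos st unfolding a_def[symmetric] b_def[symmetric] by simp
  next
    case False
    then have s: "s > 0" using st by simp
    have a: "a > 0" using dm s by (auto simp: a_def)
    have key: "s * b \<le> t * a"
    proof (cases "t \<le> dm")
      case True then have "a = dm" "b = dm" using st by (auto simp: a_def b_def)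
      then show ?thesis using st dm by (simp add: mult_right_mono)
    next
      case tdm: False
      show ?thesis
      proof (cases "s \<le> dm")
        case True
        then have "a = dm" "b \<le> t" using st tdm dm by (auto simp: a_def b_def)
        then show ?thesis using st True b
          by (metis dual_order.trans less_eq_real_def mult.commute mult_left_mono mult_right_mono)
      next
        case sdm: False
        show ?thesis
        proof (cases "s \<le> D")
          case True
          then have "a = s" "b \<le> t" using st sdm dm by (auto simp: a_def b_def)
          then show ?thesis using st by (metis mult.commute mult_left_mono)
        next
          case False
          then have "a = D" "b = D" using st sdm dm by (auto simp: a_def b_def)
          then show ?thesis using st dm by (simp add: mult_right_mono)
        qed
      qed
    qed
    have q: "s / a \<le> t / b" using key a b by (simp add: divide_simps mult.commute)
    have q0: "0 \<le> s / a" using s a by simp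
    show ?thesis unfolding a_def[symmetric] b_def[symmetric]
    proof (cases "a < b")
      case True
      have "dphi a < dphi b" using dstrict[OF _ True] a by simp
      have "dphi a * (s / a) \<le> dphi a * (t / b)" by (rule mult_left_mono) (use q dpos[OF a] in auto)
      also have "\<dots> < dphi b * (t / b)" by (rule mult_strict_right_mono) (use \<open>dphi a < dphi b\<close> b st in auto)
      finally show "dphi a * (s / a) < dphi b * (t / b)" .
    next
      case False
      then have "a = b" using ab by simp
      then show "dphi a * (s / a) < dphi b * (t / b)" using st a dpos[OF a]
        by (simp add: divide_strict_right_mono)
    qed
  qed
qed

lemma trunc_eq:
  "t \<ge> 0 \<Longrightarrow> trunc_dphi dphi dm dp t =
     dphi (max dm (real_of_ereal (min (ereal t) dp))) * (t / max dm (real_of_ereal (min (ereal t) dp)))"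
  unfolding trunc_dphi_def Let_def by (cases "t = 0") auto

lemma trunc_smono:
  assumes uc: "uniformly_convex_N_function phi dphi"
    and dm: "0 \<le> dm" "dm \<le> 1" and dp: "dp \<ge> (1::ereal)" and st: "0 \<le> s" "s < t"
  shows "trunc_dphi dphi dm dp s < trunc_dphi dphi dm dp t"
proof -
  note F = dphi_facts[OF uc]
  show ?thesis
  proof (cases dp)
    case (real d)
    then have d: "d \<ge> 1" using dp by simp
    have e: "real_of_ereal (min (ereal u) dp) = min u d" for u using real by (simp add: min_def)
    show ?thesis unfolding trunc_eq[OF st(1)] trunc_eq[of t, OF order_trans[OF st(1) less_imp_le[OF st(2)]]] e
      by (rule sm_real[OF F(4) F(3)]) (use dm d st in auto)
  next
    case PInf
    have e: "real_of_ereal (min (ereal u) dp) = min u (max t 1)" if "u \<le> t" for u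
      using PInf that by (auto simp: min_def max_def)
    show ?thesis unfolding trunc_eq[OF st(1)] trunc_eq[of t, OF order_trans[OF st(1) less_imp_le[OF st(2)]]]
      e[OF less_imp_le[OF st(2)]] e[OF order_refl]
      by (rule sm_real[OF F(4) F(3)]) (use dm st in auto)
  next
    case MInf then show ?thesis using dp by simp
  qed
qed

lemma trunc_unb:
  assumes uc: "uniformly_convex_N_function phi dphi"
    and dm: "0 \<le> dm" "dm \<le> 1" and dp: "dp \<ge> (1::ereal)" and s: "0 \<le> s"
  shows "\<exists>t\<ge>0. s \<le> trunc_dphi dphi dm dp t"
proof -
  note F = dphi_facts[OF uc]
  show ?thesis
  proof (cases dp)
    case (real d)
    then have d: "d \<ge> 1" using dp by simp
    have dd: "dphi d > 0" using F(3) d by simp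
    define t where "t = max d (s * d / dphi d)"
    have t: "t \<ge> d" "t \<ge> s * d / dphi d" by (auto simp: t_def)
    have e: "real_of_ereal (min (ereal t) dp) = d" using real t by (simp add: min_def)
    have "s = dphi d * ((s * d / dphi d) / d)" using dd d by simp
    also have "\<dots> \<le> dphi d * (t / d)" using t dd d by (intro mult_left_mono divide_right_mono) auto
    also have "\<dots> = trunc_dphi dphi dm dp t" using trunc_eq[of t dphi dm dp] t d dm e by simp
    finally show ?thesis using t d by (intro exI[of _ t]) auto
  next
    case PInf
    obtain N where N: "\<And>n. n \<ge> N \<Longrightarrow> s \<le> dphi n"
      using F(5) unfolding filterlim_at_top eventually_at_top_linorder by blast
    define t where "t = max N 1"
    have t: "t \<ge> 1" "t \<ge> N" by (auto simp: t_def)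
    have "trunc_dphi dphi dm dp t = dphi t" using trunc_eq[of t dphi dm dp] t PInf dm by simp
    then show ?thesis using N[OF t(2)] t by (intro exI[of _ t]) auto
  next
    case MInf then show ?thesis using dp by simp
  qed
qed

lemma trunc_cont:
  assumes uc: "uniformly_convex_N_function phi dphi"
  shows "continuous_on (({0..1::real} \<times> {1::ereal..}) \<times> {0::real..})
           (\<lambda>z. trunc_dphi dphi (fst (fst z)) (snd (fst z)) (snd z))"
proof -
  note F = dphi_facts[OF uc]
  define D where "D = ({0..1::real} \<times> {1::ereal..}) \<times> {0::real..}"
  define N where "N = (\<lambda>z::(real \<times> ereal) \<times> real. min (ereal (snd z)) (snd (fst z)))"
  define M where "M = (\<lambda>z. max (fst (fst z)) (real_of_ereal (N z)))"
  have Nfin: "\<bar>N z\<bar> \<noteq> \<infinity>" if "z \<in> D" for z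
    using that by (cases "snd (fst z)") (auto simp: D_def N_def min_def)
  have cN: "continuous_on D N" unfolding N_def by (intro continuous_intros)
  have cRN: "continuous_on D (\<lambda>z. real_of_ereal (N z))"
    using continuous_on_iff_real[of D N] Nfin cN by (simp add: comp_def)
  have cM: "continuous_on D M" unfolding M_def by (intro continuous_intros cRN)
  have Mb: "0 \<le> M z \<and> min (snd z) 1 \<le> M z" if "z \<in> D" for z
  proof -
    have "min (snd z) 1 \<le> real_of_ereal (N z)" using rmin(1)[of "snd (fst z)" "snd z"] that
      by (auto simp: D_def N_def)
    moreover have "0 \<le> fst (fst z)" using that by (auto simp: D_def)
    ultimately show ?thesis unfolding M_def using that by (auto simp: D_def)
  qed
  have eq: "trunc_dphi dphi (fst (fst z)) (snd (fst z)) (snd z) = dphi (M z) * (snd z / M z)"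
    if "z \<in> D" for z
    using trunc_eq[of "snd z" dphi "fst (fst z)" "snd (fst z)"] that by (auto simp: M_def N_def D_def)
  have cPM: "continuous_on D (\<lambda>z. dphi (M z))"
  proof -
    have "M ` D \<subseteq> {0..}" using Mb by auto
    from continuous_on_compose2[OF F(1) cM this] show ?thesis .
  qed
  have "continuous_on D (\<lambda>z. dphi (M z) * (snd z / M z))"
    unfolding continuous_on_def
  proof (intro ballI)
    fix z0 assume z0: "z0 \<in> D"
    let ?F = "at z0 within D"
    have tM: "(M \<longlongrightarrow> M z0) ?F" using cM z0 unfolding continuous_on_def by blast
    have tP: "((\<lambda>z. dphi (M z)) \<longlongrightarrow> dphi (M z0)) ?F" using cPM z0 unfolding continuous_on_def by blast
    have tS: "((\<lambda>z. snd z) \<longlongrightarrow> snd z0) ?F" using tendsto_snd[OF tendsto_ident_at, of z0 D] by simp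
    show "((\<lambda>z. dphi (M z) * (snd z / M z)) \<longlongrightarrow> dphi (M z0) * (snd z0 / M z0)) ?F"
    proof (cases "M z0 = 0")
      case False
      show ?thesis by (intro tendsto_mult tP tendsto_divide tS tM False)
    next
      case True
      have s0: "snd z0 = 0" using Mb[OF z0] True z0 by (auto simp: D_def min_def split: if_splits)
      have tP0: "((\<lambda>z. dphi (M z)) \<longlongrightarrow> 0) ?F" using tP True F(2) by simp
      have ev1: "eventually (\<lambda>z. snd z < 1) ?F" using order_tendstoD(2)[OF tS, of 1] s0 by simp
      have inD: "eventually (\<lambda>z. z \<in> D) ?F" by (rule ev_within) auto
      have "((\<lambda>z. dphi (M z) * (snd z / M z)) \<longlongrightarrow> 0) ?F"
      proof (rule tendsto_0_le[OF tP0, where K=1])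
        show "eventually (\<lambda>z. norm (dphi (M z) * (snd z / M z)) \<le> norm (dphi (M z)) * 1) ?F"
          using ev1 inD
        proof (rule eventually_elim2)
          fix z assume z: "snd z < 1" "z \<in> D"
          have t0: "0 \<le> snd z" using z by (auto simp: D_def)
          have tM: "snd z \<le> M z" using Mb[OF z(2)] z by (auto simp: min_def)
          have q: "\<bar>snd z / M z\<bar> \<le> 1"
          proof (cases "M z = 0")
            case True then show ?thesis by simp
          next
            case False then have "M z > 0" using Mb[OF z(2)] by auto
            then show ?thesis using t0 tM by (simp add: divide_le_eq_1)
          qed
          show "norm (dphi (M z) * (snd z / M z)) \<le> norm (dphi (M z)) * 1"
            unfolding real_norm_def abs_mult mult_1_right by (rule mult_left_le[OF q]) simp
        qed
      qed
      then show ?thesis using True F(2) by simp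
    qed
  qed
  then show ?thesis unfolding D_def[symmetric]
    by (rule continuous_on_cong[THEN iffD1, rotated 2]) (simp_all add: eq)
qed

lemma assoc_cont:
  assumes "continuous_on ((A \<times> B) \<times> C) F"
  shows "continuous_on (A \<times> B \<times> C) (\<lambda>(a, b, c). F ((a, b), c))"
proof -
  have g: "continuous_on (A \<times> B \<times> C) (\<lambda>z. ((fst z, fst (snd z)), snd (snd z)))"
    by (intro continuous_intros)
  have im: "(\<lambda>z. ((fst z, fst (snd z)), snd (snd z))) ` (A \<times> B \<times> C) \<subseteq> (A \<times> B) \<times> C" by auto
  have eq: "(\<lambda>(a, b, c). F ((a, b), c)) = (\<lambda>z. F ((fst z, fst (snd z)), snd (snd z)))"
    by (auto simp: fun_eq_iff)
  from continuous_on_compose2[OF assms g im] show ?thesis by (simp only: eq)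
qed

lemma sqrt_profile:
  fixes r :: "'a::topological_space \<Rightarrow> real \<Rightarrow> real"
  assumes cont: "continuous_on (S \<times> {0..}) (\<lambda>z. r (fst z) (snd z))"
    and zero: "\<And>x. x \<in> S \<Longrightarrow> r x 0 = 0"
    and smono: "\<And>x s t. x \<in> S \<Longrightarrow> 0 \<le> s \<Longrightarrow> s < t \<Longrightarrow> r x s < r x t"
    and unb: "\<And>x s. x \<in> S \<Longrightarrow> 0 \<le> s \<Longrightarrow> \<exists>t\<ge>0. s \<le> r x t"
  shows "continuous_on (S \<times> {0..}) (\<lambda>z. sqrt (r (fst z) (snd z) * snd z))"
    and "\<And>x. x \<in> S \<Longrightarrow> sqrt (r x 0 * 0) = 0"
    and "\<And>x s t. x \<in> S \<Longrightarrow> 0 \<le> s \<Longrightarrow> s < t \<Longrightarrow> sqrt (r x s * s) < sqrt (r x t * t)"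
    and "\<And>x s. x \<in> S \<Longrightarrow> 0 \<le> s \<Longrightarrow> \<exists>t\<ge>0. s \<le> sqrt (r x t * t)"
proof -
  have mono: "r x s \<le> r x t" if "x \<in> S" "0 \<le> s" "s \<le> t" for x s t
    using smono[OF that(1,2)] that by (cases "s = t") (auto intro: less_imp_le)
  have nn: "0 \<le> r x s" if "x \<in> S" "0 \<le> s" for x s using mono[OF that(1) order_refl that(2)] zero[OF that(1)] by simp
  show "continuous_on (S \<times> {0..}) (\<lambda>z. sqrt (r (fst z) (snd z) * snd z))"
    by (intro continuous_intros cont)
  show "\<And>x. x \<in> S \<Longrightarrow> sqrt (r x 0 * 0) = 0" by simp
  show "\<And>x s t. x \<in> S \<Longrightarrow> 0 \<le> s \<Longrightarrow> s < t \<Longrightarrow> sqrt (r x s * s) < sqrt (r x t * t)"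
  proof -
    fix x and s t :: real assume a: "x \<in> S" "0 \<le> s" "s < t"
    have "r x s * s \<le> r x s * t" using a nn[OF a(1,2)] by (intro mult_left_mono) auto
    also have "\<dots> < r x t * t" using a smono[OF a] by (intro mult_strict_right_mono) auto
    finally show "sqrt (r x s * s) < sqrt (r x t * t)" by simp
  qed
  show "\<And>x s. x \<in> S \<Longrightarrow> 0 \<le> s \<Longrightarrow> \<exists>t\<ge>0. s \<le> sqrt (r x t * t)"
  proof -
    fix x and s :: real assume a: "x \<in> S" "0 \<le> s"
    obtain t1 where t1: "t1 \<ge> 0" "s \<le> r x t1" using unb[OF a] by blast
    define t where "t = max t1 s"
    have t: "t \<ge> t1" "t \<ge> s" "t \<ge> 0" using t1 by (auto simp: t_def)
    have "s \<le> r x t" using t1 mono[OF a(1) t1(1) t(1)] by simp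
    then have "s * s \<le> r x t * t" using t a by (intro mult_mono) auto
    then have "sqrt (s * s) \<le> sqrt (r x t * t)" by (rule real_sqrt_le_mono)
    then show "\<exists>t\<ge>0. s \<le> sqrt (r x t * t)" using a t by (intro exI[of _ t]) auto
  qed
qed


theorem lemmaA9:
  fixes phi dphi :: "real \<Rightarrow> real"
  assumes "uniformly_convex_N_function phi dphi"
  shows "(continuous_on ({0..1} \<times> {1..} \<times> {0..})
           (\<lambda>(dm, dp, t). trunc_dphi dphi dm dp t)) \<and>
         (continuous_on ({0..1} \<times> {1..} \<times> UNIV)
           (\<lambda>(dm, dp, Q::real^'n^'n). A_trunc dphi dm dp Q)) \<and>
         (continuous_on ({0..1} \<times> {1..} \<times> UNIV)
           (\<lambda>(dm, dp, Q::real^'n^'n). A_trunc_inv dphi dm dp Q)) \<and>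
         (continuous_on ({0..1} \<times> {1..} \<times> UNIV)
           (\<lambda>(dm, dp, Q::real^'n^'n). V_trunc dphi dm dp Q)) \<and>
         (continuous_on ({0..1} \<times> {1..} \<times> UNIV)
           (\<lambda>(dm, dp, Q::real^'n^'n). V_trunc_inv dphi dm dp Q))"
proof -
  note uc = assms
  define S where "S = {0..1::real} \<times> {1::ereal..}"
  define rA where "rA = (\<lambda>(x::real \<times> ereal) t. trunc_dphi dphi (fst x) (snd x) t)"
  define rV where "rV = (\<lambda>(x::real \<times> ereal) t. sqrt (rA x t * t))"
  have cA: "continuous_on (S \<times> {0..}) (\<lambda>z. rA (fst z) (snd z))"
    using trunc_cont[OF uc] by (simp add: S_def rA_def)
  have zA: "\<And>x. x \<in> S \<Longrightarrow> rA x 0 = 0" by (simp add: rA_def trunc_dphi_def)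
  have sA: "\<And>x s t. x \<in> S \<Longrightarrow> 0 \<le> s \<Longrightarrow> s < t \<Longrightarrow> rA x s < rA x t"
  proof -
    fix x and s t :: real assume a: "x \<in> S" "0 \<le> s" "s < t"
    obtain dm dp where x: "x = (dm, dp)" by (cases x)
    show "rA x s < rA x t" unfolding x rA_def fst_conv snd_conv
      by (rule trunc_smono[OF uc]) (use a x in \<open>auto simp: S_def\<close>)
  qed
  have uA: "\<And>x s. x \<in> S \<Longrightarrow> 0 \<le> s \<Longrightarrow> \<exists>t\<ge>0. s \<le> rA x t"
  proof -
    fix x and s :: real assume a: "x \<in> S" "0 \<le> s"
    obtain dm dp where x: "x = (dm, dp)" by (cases x)
    show "\<exists>t\<ge>0. s \<le> rA x t" unfolding x rA_def fst_conv snd_conv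
      by (rule trunc_unb[OF uc]) (use a x in \<open>auto simp: S_def\<close>)
  qed
  have cV: "continuous_on (S \<times> {0..}) (\<lambda>z. rV (fst z) (snd z))"
    unfolding rV_def by (rule sqrt_profile(1)[OF cA zA sA uA])
  have zV: "\<And>x. x \<in> S \<Longrightarrow> rV x 0 = 0" by (simp add: rV_def)
  have sV: "\<And>x s t. x \<in> S \<Longrightarrow> 0 \<le> s \<Longrightarrow> s < t \<Longrightarrow> rV x s < rV x t"
    unfolding rV_def by (rule sqrt_profile(3)[OF cA zA sA uA])
  have uV: "\<And>x s. x \<in> S \<Longrightarrow> 0 \<le> s \<Longrightarrow> \<exists>t\<ge>0. s \<le> rV x t"
    unfolding rV_def by (rule sqrt_profile(4)[OF cA zA sA uA])
  define hA where "hA = (\<lambda>x s. THE t. 0 \<le> t \<and> rA x t = s)"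
  define hV where "hV = (\<lambda>x s. THE t. 0 \<le> t \<and> rV x t = s)"
  have chA: "continuous_on (S \<times> {0..}) (\<lambda>z. hA (fst z) (snd z))"
    unfolding hA_def by (rule inv_scalar(1)[OF cA zA sA uA])
  have zhA: "\<And>x. x \<in> S \<Longrightarrow> hA x 0 = 0"
    unfolding hA_def by (rule inv_scalar(2)[OF cA zA sA uA])
  have ihA: "\<And>x. x \<in> S \<Longrightarrow> inv (radial rA x) = (radial hA x :: real^'n^'n \<Rightarrow> real^'n^'n)"
    unfolding hA_def by (rule inv_scalar(5)[OF cA zA sA uA])
  have chV: "continuous_on (S \<times> {0..}) (\<lambda>z. hV (fst z) (snd z))"
    unfolding hV_def by (rule inv_scalar(1)[OF cV zV sV uV])
  have zhV: "\<And>x. x \<in> S \<Longrightarrow> hV x 0 = 0"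
    unfolding hV_def by (rule inv_scalar(2)[OF cV zV sV uV])
  have ihV: "\<And>x. x \<in> S \<Longrightarrow> inv (radial rV x) = (radial hV x :: real^'n^'n \<Rightarrow> real^'n^'n)"
    unfolding hV_def by (rule inv_scalar(5)[OF cV zV sV uV])
  have eqA: "A_trunc dphi dm dp = radial rA (dm, dp)" for dm dp
    by (rule ext) (simp add: A_trunc_def radial_def rA_def)
  have eqV: "V_trunc dphi dm dp = radial rV (dm, dp)" for dm dp
    by (rule ext) (simp add: V_trunc_def radial_def rV_def rA_def)
  have P1: "continuous_on ({0..1} \<times> {1..} \<times> {0..}) (\<lambda>(dm, dp, t). trunc_dphi dphi dm dp t)"
    using assoc_cont[OF trunc_cont[OF uc]] by simp
  have P2: "continuous_on ({0..1} \<times> {1..} \<times> UNIV) (\<lambda>(dm, dp, Q::real^'n^'n). A_trunc dphi dm dp Q)"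
  proof -
    have "continuous_on (S \<times> UNIV) (\<lambda>z. radial rA (fst z) (snd z :: real^'n^'n))"
      by (rule radial_cont[OF cA zA])
    from assoc_cont[OF this[unfolded S_def]] show ?thesis by (simp add: eqA)
  qed
  have P4: "continuous_on ({0..1} \<times> {1..} \<times> UNIV) (\<lambda>(dm, dp, Q::real^'n^'n). V_trunc dphi dm dp Q)"
  proof -
    have "continuous_on (S \<times> UNIV) (\<lambda>z. radial rV (fst z) (snd z :: real^'n^'n))"
      by (rule radial_cont[OF cV zV])
    from assoc_cont[OF this[unfolded S_def]] show ?thesis by (simp add: eqV)
  qed
  have P3: "continuous_on ({0..1} \<times> {1..} \<times> UNIV) (\<lambda>(dm, dp, Q::real^'n^'n). A_trunc_inv dphi dm dp Q)"
  proof -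
    have "continuous_on (S \<times> UNIV) (\<lambda>z. radial hA (fst z) (snd z :: real^'n^'n))"
      by (rule radial_cont[OF chA zhA])
    from assoc_cont[OF this[unfolded S_def]]
    show ?thesis
    proof (rule continuous_on_cong[THEN iffD1, rotated 2])
      fix z :: "real \<times> ereal \<times> (real^'n^'n)" assume z: "z \<in> {0..1} \<times> {1..} \<times> UNIV"
      obtain dm dp Q where zz: "z = (dm, dp, Q)" by (cases z) auto
      have "(dm, dp) \<in> S" using z zz by (simp add: S_def)
      from ihA[OF this] show "(\<lambda>(a, b, c). radial hA (fst ((a, b), c)) (snd ((a, b), c))) z =
          (\<lambda>(dm, dp, Q). A_trunc_inv dphi dm dp Q) z"
        unfolding zz by (simp add: A_trunc_inv_def eqA)
    qed simp
  qed
  have P5: "continuous_on ({0..1} \<times> {1..} \<times> UNIV) (\<lambda>(dm, dp, Q::real^'n^'n). V_trunc_inv dphi dm dp Q)"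
  proof -
    have "continuous_on (S \<times> UNIV) (\<lambda>z. radial hV (fst z) (snd z :: real^'n^'n))"
      by (rule radial_cont[OF chV zhV])
    from assoc_cont[OF this[unfolded S_def]]
    show ?thesis
    proof (rule continuous_on_cong[THEN iffD1, rotated 2])
      fix z :: "real \<times> ereal \<times> (real^'n^'n)" assume z: "z \<in> {0..1} \<times> {1..} \<times> UNIV"
      obtain dm dp Q where zz: "z = (dm, dp, Q)" by (cases z) auto
      have "(dm, dp) \<in> S" using z zz by (simp add: S_def)
      from ihV[OF this] show "(\<lambda>(a, b, c). radial hV (fst ((a, b), c)) (snd ((a, b), c))) z =
          (\<lambda>(dm, dp, Q). V_trunc_inv dphi dm dp Q) z"
        unfolding zz by (simp add: V_trunc_inv_def eqV)
    qed simp
  qed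
  show ?thesis using P1 P2 P3 P4 P5 by blast
qed

end
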